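(* Let $Q:\mathbb{D}\to[0,\infty]$ be a measurable function and let $\Phi:[0,\infty]\to[0,\infty]$ be a non-decreasing convex function. Then $$\int_0^1\frac{dr}{r\,q(r)}\ \ge\ \frac12\int_N^\infty\frac{d\tau}{\tau\,\Phi^{-1}(\tau)},$$ where $q(r)=\frac1{2\pi}\int_0^{2\pi}Q(re^{i\vartheta})\,d\vartheta$ is the average of $Q$ over the circle $|z|=r$ and $N=\int_{\mathbb{D}}\Phi(Q(z))\,dx\,dy$.
   Context: $\mathbb{D}=\{z\in\mathbb{C}:|z|<1\}$. For non-decreasing $\Phi$, $\Phi^{-1}(\tau)=\inf\{t\in[0,\infty]:\Phi(t)\ge\tau\}$, with $\inf\emptyset=\infty$. *)

theory Defs
  imports "HOL-Analysis.Analysis"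
begin

definition circ_mean :: "(complex \<Rightarrow> ennreal) \<Rightarrow> real \<Rightarrow> ennreal" where
  "circ_mean Q r = ennreal (1 / (2 * pi)) *
     (\<integral>\<^sup>+ \<theta> \<in> {0..2*pi}. Q (complex_of_real r * cis \<theta>) \<partial>lborel)"

definition gen_inv :: "(ennreal \<Rightarrow> ennreal) \<Rightarrow> ennreal \<Rightarrow> ennreal" where
  "gen_inv \<Phi> \<tau> = Inf {t. \<Phi> t \<ge> \<tau>}"

definition convex_ennreal :: "(ennreal \<Rightarrow> ennreal) \<Rightarrow> bool" where
  "convex_ennreal \<Phi> \<longleftrightarrow> (\<forall>x y. \<forall>u::real. 0 \<le> u \<and> u \<le> 1 \<longrightarrow>
      \<Phi> (ennreal u * x + ennreal (1 - u) * y) \<le> ennreal u * \<Phi> x + ennreal (1 - u) * \<Phi> y)"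

end

theory Submission
  imports Defs
begin

lemma measurable_Complex_pair[measurable]:
  "(\<lambda>(x,y). Complex x y) \<in> borel_measurable (lborel \<Otimes>\<^sub>M lborel)"
proof -
  have "(\<lambda>(x,y). Complex x y) = (\<lambda>p. complex_of_real (fst p) + \<i> * complex_of_real (snd p))"
    by (auto simp: complex_eq_iff)
  then show ?thesis by simp
qed

lemma lborel_complex_eq:
  "distr (lborel \<Otimes>\<^sub>M lborel) borel (\<lambda>(x,y). Complex x y) = (lborel :: complex measure)"
proof (rule lborel_eqI[symmetric])
  fix l u :: complex
  assume lu: "\<And>b. b \<in> Basis \<Longrightarrow> l \<bullet> b \<le> u \<bullet> b"
  have le: "Re l \<le> Re u" "Im l \<le> Im u"
    using lu[of 1] lu[of \<i>] by (auto simp: inner_complex_def)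
  have "(\<lambda>(x,y). Complex x y) -` box l u \<inter> space (lborel \<Otimes>\<^sub>M lborel) =
        {Re l<..<Re u} \<times> {Im l<..<Im u}"
    by (auto simp: box_def Basis_complex_def inner_complex_def space_pair_measure)
  then have "emeasure (distr (lborel \<Otimes>\<^sub>M lborel) borel (\<lambda>(x,y). Complex x y)) (box l u) =
     emeasure (lborel \<Otimes>\<^sub>M lborel) ({Re l<..<Re u} \<times> {Im l<..<Im u})"
    by (subst emeasure_distr) auto
  also have "\<dots> = ennreal (Re u - Re l) * ennreal (Im u - Im l)"
    using le by (simp add: lborel.emeasure_pair_measure_Times)
  also have "\<dots> = ennreal (\<Prod>b\<in>Basis. (u - l) \<bullet> b)"
    using le by (simp add: Basis_complex_def inner_complex_def ennreal_mult')
  finally show "emeasure (distr (lborel \<Otimes>\<^sub>M lborel) borel (\<lambda>(x,y). Complex x y)) (box l u) =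
     ennreal (\<Prod>b\<in>Basis. (u - l) \<bullet> b)" .
qed simp

lemma nn_integral_complex_xy:
  assumes [measurable]: "G \<in> borel_measurable borel"
  shows "(\<integral>\<^sup>+z. G z \<partial>lborel) = (\<integral>\<^sup>+x. \<integral>\<^sup>+y. G (Complex x y) \<partial>lborel \<partial>lborel)"
proof -
  have "(\<integral>\<^sup>+z. G z \<partial>lborel) = (\<integral>\<^sup>+z. G z \<partial>distr (lborel \<Otimes>\<^sub>M lborel) borel (\<lambda>(x,y). Complex x y))"
    by (simp add: lborel_complex_eq)
  also have "\<dots> = (\<integral>\<^sup>+p. G (case p of (x,y) \<Rightarrow> Complex x y) \<partial>(lborel \<Otimes>\<^sub>M lborel))"
    by (subst nn_integral_distr) auto
  also have "\<dots> = (\<integral>\<^sup>+x. \<integral>\<^sup>+y. G (Complex x y) \<partial>lborel \<partial>lborel)"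
    by (subst lborel.nn_integral_fst[symmetric]) auto
  finally show ?thesis .
qed

lemma nn_integral_complex_yx:
  assumes [measurable]: "G \<in> borel_measurable borel"
  shows "(\<integral>\<^sup>+z. G z \<partial>lborel) = (\<integral>\<^sup>+y. \<integral>\<^sup>+x. G (Complex x y) \<partial>lborel \<partial>lborel)"
  unfolding nn_integral_complex_xy[OF assms]
  by (rule lborel_pair.Fubini'[symmetric]) simp

lemma shear_x:
  assumes [measurable]: "G \<in> borel_measurable borel"
  shows "(\<integral>\<^sup>+z. G (Complex (Re z + c * Im z) (Im z)) \<partial>lborel) = (\<integral>\<^sup>+z. G z \<partial>lborel)"
proof -
  have "(\<integral>\<^sup>+z. G (Complex (Re z + c * Im z) (Im z)) \<partial>lborel) =
        (\<integral>\<^sup>+y. \<integral>\<^sup>+x. G (Complex (x + c * y) y) \<partial>lborel \<partial>lborel)"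
    by (subst nn_integral_complex_yx) auto
  also have "\<dots> = (\<integral>\<^sup>+y. \<integral>\<^sup>+x. G (Complex x y) \<partial>lborel \<partial>lborel)"
  proof (rule nn_integral_cong)
    fix y :: real
    show "(\<integral>\<^sup>+x. G (Complex (x + c * y) y) \<partial>lborel) = (\<integral>\<^sup>+x. G (Complex x y) \<partial>lborel)"
      using nn_integral_real_affine[of "\<lambda>x. G (Complex x y)" 1 "c * y"]
      by (simp add: add.commute)
  qed
  also have "\<dots> = (\<integral>\<^sup>+z. G z \<partial>lborel)"
    by (subst nn_integral_complex_yx) auto
  finally show ?thesis .
qed

lemma shear_y:
  assumes [measurable]: "G \<in> borel_measurable borel"
  shows "(\<integral>\<^sup>+z. G (Complex (Re z) (Im z + c * Re z)) \<partial>lborel) = (\<integral>\<^sup>+z. G z \<partial>lborel)"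
proof -
  have "(\<integral>\<^sup>+z. G (Complex (Re z) (Im z + c * Re z)) \<partial>lborel) =
        (\<integral>\<^sup>+x. \<integral>\<^sup>+y. G (Complex x (y + c * x)) \<partial>lborel \<partial>lborel)"
    by (subst nn_integral_complex_xy) auto
  also have "\<dots> = (\<integral>\<^sup>+x. \<integral>\<^sup>+y. G (Complex x y) \<partial>lborel \<partial>lborel)"
  proof (rule nn_integral_cong)
    fix x :: real
    show "(\<integral>\<^sup>+y. G (Complex x (y + c * x)) \<partial>lborel) = (\<integral>\<^sup>+y. G (Complex x y) \<partial>lborel)"
      using nn_integral_real_affine[of "\<lambda>y. G (Complex x y)" 1 "c * x"]
      by (simp add: add.commute)
  qed
  also have "\<dots> = (\<integral>\<^sup>+z. G z \<partial>lborel)"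
    by (subst nn_integral_complex_xy) auto
  finally show ?thesis .
qed

lemma shear_x':
  assumes [measurable]: "G \<in> borel_measurable borel"
  shows "(\<integral>\<^sup>+z. G (z + of_real (c * Im z)) \<partial>lborel) = (\<integral>\<^sup>+z. G z \<partial>lborel)"
proof -
  have "\<And>z. z + of_real (c * Im z) = Complex (Re z + c * Im z) (Im z)"
    by (simp add: complex_eq_iff)
  then show ?thesis using shear_x[OF assms, of c] by simp
qed

lemma shear_y':
  assumes [measurable]: "G \<in> borel_measurable borel"
  shows "(\<integral>\<^sup>+z. G (z + \<i> * of_real (c * Re z)) \<partial>lborel) = (\<integral>\<^sup>+z. G z \<partial>lborel)"
proof -
  have "\<And>z. z + \<i> * of_real (c * Re z) = Complex (Re z) (Im z + c * Re z)"
    by (simp add: complex_eq_iff)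
  then show ?thesis using shear_y[OF assms, of c] by simp
qed

lemma rot_as_shears:
  assumes "cos (g/2) \<noteq> 0"
  defines "a \<equiv> - tan (g/2)" and "s \<equiv> sin g"
  shows "cis g * z = (let w1 = z + of_real (a * Im z); w2 = w1 + \<i> * of_real (s * Re w1)
                      in w2 + of_real (a * Im w2))"
proof -
  define b where "b = g/2"
  have g: "g = 2*b" by (simp add: b_def)
  have cb: "cos b \<noteq> 0" using assms by (simp add: b_def)
  have sg: "sin g = 2 * sin b * cos b" and cg: "cos g = 1 - 2 * (sin b)^2"
    by (simp_all add: g sin_double cos_double_sin)
  have sc: "(sin b)^2 + (cos b)^2 = 1" by simp
  have ta: "a = - sin b / cos b" by (simp add: a_def b_def tan_def)
  have e1: "1 + a * s = cos g"
    using cb by (simp add: ta s_def sg cg field_simps power2_eq_square)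
  have e2: "2 * a + a^2 * s = - sin g"
  proof -
    have "2 * a + a^2 * s = - 2 * sin b * (1 - (sin b)^2) / cos b"
      using cb by (simp add: ta s_def sg field_simps power2_eq_square)
    also have "1 - (sin b)^2 = (cos b)^2" using sc by linarith
    also have "- 2 * sin b * (cos b)^2 / cos b = - 2 * sin b * cos b"
      using cb by (simp add: field_simps power2_eq_square)
    finally show ?thesis by (simp add: sg)
  qed
  have r1: "Re z + a * Im z + a * (Im z + s * (Re z + a * Im z)) = (1 + a * s) * Re z + (2*a + a^2 * s) * Im z"
    by (simp add: algebra_simps power2_eq_square)
  have r2: "Im z + s * (Re z + a * Im z) = s * Re z + (1 + a * s) * Im z"
    by (simp add: algebra_simps)
  have q1: "(1 + a * s) * Re z + (2*a + a^2 * s) * Im z = cos g * Re z - sin g * Im z"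
    by (simp only: e1 e2)
  have q2: "s * Re z + (1 + a * s) * Im z = sin g * Re z + cos g * Im z"
    by (simp only: e1 flip: s_def)
  let ?w1 = "z + of_real (a * Im z)"
  let ?w2 = "?w1 + \<i> * of_real (s * Re ?w1)"
  have "Re (?w2 + of_real (a * Im ?w2)) = Re z + a * Im z + a * (Im z + s * (Re z + a * Im z))"
    by simp
  also have "\<dots> = Re (cis g * z)" using r1 q1 by simp
  finally have RE: "Re (?w2 + of_real (a * Im ?w2)) = Re (cis g * z)" .
  have "Im (?w2 + of_real (a * Im ?w2)) = Im z + s * (Re z + a * Im z)"
    by simp
  also have "\<dots> = Im (cis g * z)" using r2 q2 by simp
  finally have IM: "Im (?w2 + of_real (a * Im ?w2)) = Im (cis g * z)" .
  show ?thesis unfolding Let_def using RE IM by (simp add: complex_eq_iff)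
qed

lemma rot_inv_small:
  assumes [measurable]: "G \<in> borel_measurable borel" and c: "cos (g/2) \<noteq> 0"
  shows "(\<integral>\<^sup>+z. G (cis g * z) \<partial>lborel) = (\<integral>\<^sup>+z. G z \<partial>lborel)"
proof -
  define a where "a = - tan (g/2)"
  define s where "s = sin g"
  define G2 where "G2 = (\<lambda>w2. G (w2 + of_real (a * Im w2)))"
  define G3 where "G3 = (\<lambda>w1. G2 (w1 + \<i> * of_real (s * Re w1)))"
  have [measurable]: "G2 \<in> borel_measurable borel" "G3 \<in> borel_measurable borel"
    unfolding G2_def G3_def by simp_all
  have "\<And>z. G (cis g * z) = G3 (z + of_real (a * Im z))"
    using rot_as_shears[OF c] by (simp add: G2_def G3_def a_def s_def Let_def)
  then have "(\<integral>\<^sup>+z. G (cis g * z) \<partial>lborel) = (\<integral>\<^sup>+z. G3 (z + of_real (a * Im z)) \<partial>lborel)"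
    by simp
  also have "\<dots> = (\<integral>\<^sup>+z. G3 z \<partial>lborel)" by (rule shear_x') simp
  also have "\<dots> = (\<integral>\<^sup>+z. G2 z \<partial>lborel)" unfolding G3_def by (rule shear_y') simp
  also have "\<dots> = (\<integral>\<^sup>+z. G z \<partial>lborel)" unfolding G2_def by (rule shear_x') simp
  finally show ?thesis .
qed

lemma refl_inv:
  fixes G :: "complex \<Rightarrow> ennreal"
  assumes [measurable]: "G \<in> borel_measurable borel"
  shows "(\<integral>\<^sup>+z. G (- z) \<partial>lborel) = (\<integral>\<^sup>+z. G z \<partial>lborel)"
proof -
  have eq: "(lborel::complex measure) = density (distr lborel borel uminus) (\<lambda>x. 1)"
    using lborel_affine[of "-1::real" "0::complex"] by simp
  have "(\<integral>\<^sup>+z. G z \<partial>lborel) =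
    (\<integral>\<^sup>+z. G z \<partial>density (distr lborel borel uminus) (\<lambda>x. 1))"
    by (rule arg_cong[where f = "\<lambda>M. integral\<^sup>N M G", OF eq])
  also have "\<dots> = (\<integral>\<^sup>+z. G (- z) \<partial>lborel)"
    by (simp add: nn_integral_density nn_integral_distr)
  finally show ?thesis ..
qed

lemma rot_inv:
  assumes [measurable]: "G \<in> borel_measurable borel"
  shows "(\<integral>\<^sup>+z. G (cis g * z) \<partial>lborel) = (\<integral>\<^sup>+z. G z \<partial>lborel)"
proof (cases "cos (g/2) = 0")
  case False then show ?thesis by (rule rot_inv_small[OF assms])
next
  case True
  then have "(sin (g/2))^2 = 1" using sin_cos_squared_add[of "g/2"] by simp
  then have s: "sin (g/2) \<noteq> 0" by auto
  have c2: "cos ((g - pi)/2) \<noteq> 0"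
    using s by (simp add: diff_divide_distrib cos_diff)
  have "\<And>z. cis g * z = - (cis (g - pi) * z)"
  proof -
    have "cis (g - pi) = - cis g" by (simp add: complex_eq_iff cos_diff sin_diff)
    then show "\<And>z. cis g * z = - (cis (g - pi) * z)" by simp
  qed
  then have "(\<integral>\<^sup>+z. G (cis g * z) \<partial>lborel) = (\<integral>\<^sup>+z. (\<lambda>w. G (- w)) (cis (g - pi) * z) \<partial>lborel)"
    by simp
  also have "\<dots> = (\<integral>\<^sup>+z. G (- z) \<partial>lborel)" by (rule rot_inv_small[OF _ c2]) simp
  also have "\<dots> = (\<integral>\<^sup>+z. G z \<partial>lborel)" by (rule refl_inv[OF assms])
  finally show ?thesis .
qed

lemma emeasure_cball_complex:
  "r \<ge> 0 \<Longrightarrow> emeasure lborel (cball (0::complex) r) = ennreal (pi * r^2)"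
  using emeasure_cball[of r "0::complex"] by (simp add: eval_unit_ball_vol)

lemma distr_cmod:
  "distr lborel borel (cmod :: complex \<Rightarrow> real) = density lborel (\<lambda>\<rho>. ennreal (2*pi*\<rho>) * indicator {0..} \<rho>)"
proof (rule measure_eqI_generator_eq[where E="range (\<lambda>a. {..a})" and \<Omega>=UNIV and A="\<lambda>i. {..real i}"])
  show "Int_stable (range (\<lambda>a::real. {..a}))"
    by (auto simp: Int_stable_def)
  show "range (\<lambda>a::real. {..a}) \<subseteq> Pow UNIV" by simp
  have "sets (borel::real measure) = sigma_sets UNIV (range (\<lambda>a. {..a}))"
    by (subst borel_eq_atMost) (simp add: sets_measure_of)
  then show "sets (distr lborel borel (cmod :: complex \<Rightarrow> real)) = sigma_sets UNIV (range (\<lambda>a. {..a}))"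
    "sets (density lborel (\<lambda>\<rho>. ennreal (2*pi*\<rho>) * indicator {0..} \<rho>)) = sigma_sets UNIV (range (\<lambda>a. {..a}))"
    by simp_all
  have em: "emeasure (distr lborel borel (cmod :: complex \<Rightarrow> real)) {..a} =
      (if a \<ge> 0 then ennreal (pi * a^2) else 0)" for a :: real
  proof -
    have "emeasure (distr lborel borel (cmod :: complex \<Rightarrow> real)) {..a} = emeasure lborel (cball (0::complex) a)"
      by (subst emeasure_distr) (auto intro!: arg_cong[where f="emeasure lborel"] simp: cball_def)
    then show ?thesis using emeasure_cball_complex[of a] by (auto simp: cball_empty)
  qed
  show "emeasure (distr lborel borel (cmod :: complex \<Rightarrow> real)) X =
        emeasure (density lborel (\<lambda>\<rho>. ennreal (2*pi*\<rho>) * indicator {0..} \<rho>)) X"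
    if "X \<in> range (\<lambda>a. {..a})" for X
  proof -
    from that obtain a where X: "X = {..a}" by auto
    have "emeasure (density lborel (\<lambda>\<rho>. ennreal (2*pi*\<rho>) * indicator {0..} \<rho>)) {..a} =
        (\<integral>\<^sup>+x. ennreal (2*pi*x) * indicator {0..a} x \<partial>lborel)"
      by (subst emeasure_density) (auto intro!: nn_integral_cong split: split_indicator)
    also have "\<dots> = (if a \<ge> 0 then ennreal (pi * a^2) else 0)"
    proof (cases "a \<ge> 0")
      case True
      have "(\<integral>\<^sup>+x. ennreal (2*pi*x) * indicator {0..a} x \<partial>lborel) = pi * a^2 - pi * 0^2"
        by (rule nn_integral_FTC_Icc) (auto intro!: derivative_eq_intros simp: True)
      then show ?thesis using True by simp
    next
      case False
      then have "{0..a} = {}" by auto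
      then show ?thesis using False by simp
    qed
    finally show ?thesis using X em by simp
  qed
  show "range (\<lambda>i::nat. {..real i}) \<subseteq> range (\<lambda>a. {..a})" by auto
  show "(\<Union>i::nat. {..real i}) = UNIV"
    by (auto simp: real_arch_simple)
  show "emeasure (distr lborel borel (cmod :: complex \<Rightarrow> real)) {..real i} \<noteq> \<infinity>" for i :: nat
    using em by simp
qed

lemma nn_integral_cmod:
  assumes [measurable]: "a \<in> borel_measurable borel"
  shows "(\<integral>\<^sup>+z. a (cmod z) \<partial>(lborel::complex measure)) = (\<integral>\<^sup>+\<rho>. ennreal (2*pi*\<rho>) * indicator {0..} \<rho> * a \<rho> \<partial>lborel)"
proof -
  have "(\<integral>\<^sup>+z. a (cmod z) \<partial>(lborel::complex measure)) = (\<integral>\<^sup>+\<rho>. a \<rho> \<partial>distr lborel borel (cmod :: complex \<Rightarrow> real))"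
    by (subst nn_integral_distr) auto
  also have "\<dots> = (\<integral>\<^sup>+\<rho>. ennreal (2*pi*\<rho>) * indicator {0..} \<rho> * a \<rho> \<partial>lborel)"
    by (simp add: distr_cmod nn_integral_density)
  finally show ?thesis .
qed

lemma measurable_cis[measurable]: "cis \<in> borel_measurable borel"
  by (intro borel_measurable_continuous_onI continuous_intros)

lemma periodic_shift:
  fixes h :: "real \<Rightarrow> ennreal"
  assumes [measurable]: "h \<in> borel_measurable borel"
    and per: "\<And>x. h (x + 2*pi) = h x"
    and b: "0 \<le> b" "b \<le> 2*pi"
  shows "(\<integral>\<^sup>+\<theta>. h (\<theta> + b) * indicator {0..2*pi} \<theta> \<partial>lborel) = (\<integral>\<^sup>+\<theta>. h \<theta> * indicator {0..2*pi} \<theta> \<partial>lborel)"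
proof -
  have "(\<integral>\<^sup>+\<theta>. h (\<theta> + b) * indicator {0..2*pi} \<theta> \<partial>lborel) =
        (\<integral>\<^sup>+x. h x * indicator {b..b+2*pi} x \<partial>lborel)"
    using nn_integral_real_affine[of "\<lambda>x. h x * indicator {b..b+2*pi} x" 1 b]
    by (auto simp: add.commute intro!: nn_integral_cong split: split_indicator)
  also have "\<dots> = (\<integral>\<^sup>+x. h x * indicator {b..2*pi} x + h x * indicator {2*pi<..b+2*pi} x \<partial>lborel)"
    using b by (intro nn_integral_cong) (auto split: split_indicator)
  also have "\<dots> = (\<integral>\<^sup>+x. h x * indicator {b..2*pi} x \<partial>lborel) + (\<integral>\<^sup>+x. h x * indicator {2*pi<..b+2*pi} x \<partial>lborel)"
    by (rule nn_integral_add) auto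
  also have "(\<integral>\<^sup>+x. h x * indicator {2*pi<..b+2*pi} x \<partial>lborel) = (\<integral>\<^sup>+x. h x * indicator {0<..b} x \<partial>lborel)"
    using nn_integral_real_affine[of "\<lambda>x. h x * indicator {2*pi<..b+2*pi} x" 1 "2*pi"]
    by (auto simp: add.commute per intro!: nn_integral_cong split: split_indicator)
  also have "(\<integral>\<^sup>+x. h x * indicator {b..2*pi} x \<partial>lborel) + (\<integral>\<^sup>+x. h x * indicator {0<..b} x \<partial>lborel) =
     (\<integral>\<^sup>+x. h x * indicator {b..2*pi} x + h x * indicator {0<..b} x \<partial>lborel)"
    by (rule nn_integral_add[symmetric]) auto
  also have "\<dots> = (\<integral>\<^sup>+x. h x * indicator {0..2*pi} x \<partial>lborel)"
  proof (rule nn_integral_cong_AE)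
    show "AE x in lborel. h x * indicator {b..2*pi} x + h x * indicator {0<..b} x = h x * indicator {0..2*pi} x"
      using AE_lborel_singleton[of 0] AE_lborel_singleton[of b]
      by eventually_elim (use b in \<open>auto split: split_indicator\<close>)
  qed
  finally show ?thesis .
qed

lemma radial_avg:
  fixes G :: "complex \<Rightarrow> ennreal"
  assumes [measurable]: "G \<in> borel_measurable borel"
  shows "(\<integral>\<^sup>+\<theta>. G (cis \<theta> * z) * indicator {0..2*pi} \<theta> \<partial>lborel) =
         (\<integral>\<^sup>+\<theta>. G (of_real (cmod z) * cis \<theta>) * indicator {0..2*pi} \<theta> \<partial>lborel)"
proof -
  define h where "h = (\<lambda>\<theta>. G (of_real (cmod z) * cis \<theta>))"
  have [measurable]: "h \<in> borel_measurable borel" unfolding h_def by simp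
  have eq: "cis \<theta> * z = of_real (cmod z) * cis (\<theta> + Arg2pi z)" for \<theta>
  proof -
    have r: "Re z = cmod z * cos (Arg2pi z)" "Im z = cmod z * sin (Arg2pi z)"
      using cos_Arg2pi sin_Arg2pi by simp_all
    show ?thesis by (simp add: complex_eq_iff cos_add sin_add r algebra_simps)
  qed
  have per: "h (x + 2*pi) = h x" for x
  proof -
    have "cis (x + 2*pi) = cis x" by (simp add: complex_eq_iff)
    then show ?thesis unfolding h_def by simp
  qed
  have "(\<integral>\<^sup>+\<theta>. G (cis \<theta> * z) * indicator {0..2*pi} \<theta> \<partial>lborel) =
        (\<integral>\<^sup>+\<theta>. h (\<theta> + Arg2pi z) * indicator {0..2*pi} \<theta> \<partial>lborel)"
    by (simp add: eq h_def)
  also have "\<dots> = (\<integral>\<^sup>+\<theta>. h \<theta> * indicator {0..2*pi} \<theta> \<partial>lborel)"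
    by (rule periodic_shift) (use Arg2pi[of z] per in auto)
  finally show ?thesis by (simp add: h_def)
qed

lemma polar:
  fixes G :: "complex \<Rightarrow> ennreal"
  assumes [measurable]: "G \<in> borel_measurable borel"
  shows "(\<integral>\<^sup>+z. G z \<partial>lborel) =
    (\<integral>\<^sup>+\<rho>. ennreal \<rho> * indicator {0..} \<rho> *
        (\<integral>\<^sup>+\<theta>. G (of_real \<rho> * cis \<theta>) * indicator {0..2*pi} \<theta> \<partial>lborel) \<partial>lborel)"
proof -
  define a where "a = (\<lambda>\<rho>. \<integral>\<^sup>+\<theta>. G (of_real \<rho> * cis \<theta>) * indicator {0..2*pi} \<theta> \<partial>lborel)"
  have [measurable]: "a \<in> borel_measurable borel" unfolding a_def by measurable
  have "ennreal (2*pi) * (\<integral>\<^sup>+z. G z \<partial>lborel) =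
        (\<integral>\<^sup>+\<theta>. (\<integral>\<^sup>+z. G z \<partial>lborel) * indicator {0..2*pi} \<theta> \<partial>lborel)"
    by (subst nn_integral_cmult_indicator) (auto simp: mult.commute)
  also have "\<dots> = (\<integral>\<^sup>+\<theta>. (\<integral>\<^sup>+z. G (cis \<theta> * z) * indicator {0..2*pi} \<theta> \<partial>lborel) \<partial>lborel)"
    by (intro nn_integral_cong) (simp add: nn_integral_multc rot_inv)
  also have "\<dots> = (\<integral>\<^sup>+z. (\<integral>\<^sup>+\<theta>. G (cis \<theta> * z) * indicator {0..2*pi} \<theta> \<partial>lborel) \<partial>lborel)"
    by (rule lborel_pair.Fubini') measurable
  also have "\<dots> = (\<integral>\<^sup>+z. a (cmod z) \<partial>lborel)"
    by (simp add: radial_avg a_def)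
  also have "\<dots> = (\<integral>\<^sup>+\<rho>. ennreal (2*pi) * (ennreal \<rho> * indicator {0..} \<rho> * a \<rho>) \<partial>lborel)"
    by (subst nn_integral_cmod) (auto intro!: nn_integral_cong simp: ennreal_mult' mult.assoc split: split_indicator)
  also have "\<dots> = ennreal (2*pi) * (\<integral>\<^sup>+\<rho>. ennreal \<rho> * indicator {0..} \<rho> * a \<rho> \<partial>lborel)"
    by (rule nn_integral_cmult) simp
  finally have *: "ennreal (2*pi) * (\<integral>\<^sup>+z. G z \<partial>lborel) = ennreal (2*pi) * (\<integral>\<^sup>+\<rho>. ennreal \<rho> * indicator {0..} \<rho> * a \<rho> \<partial>lborel)" .
  have c: "ennreal (1/(2*pi)) * ennreal (2*pi) = 1"
    by (simp flip: ennreal_mult)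
  have "(\<integral>\<^sup>+z. G z \<partial>lborel) = ennreal (1/(2*pi)) * (ennreal (2*pi) * (\<integral>\<^sup>+z. G z \<partial>lborel))"
    by (simp add: mult.assoc[symmetric] c)
  also have "\<dots> = (\<integral>\<^sup>+\<rho>. ennreal \<rho> * indicator {0..} \<rho> * a \<rho> \<partial>lborel)"
    by (simp add: * mult.assoc[symmetric] c)
  finally show ?thesis by (simp add: a_def)
qed

lemma emeasure_lborel_Ici_top: "emeasure lborel {0::real..} = \<infinity>"
proof -
  have "(SUP n::nat. (of_nat n::ennreal)) \<le> emeasure lborel {0::real..}"
  proof (rule SUP_least)
    fix n :: nat
    have "emeasure lborel {0..real n} \<le> emeasure lborel {0::real..}"
      by (rule emeasure_mono) auto
    then show "of_nat n \<le> emeasure lborel {0::real..}" by (simp add: ennreal_of_nat_eq_real_of_nat)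
  qed
  then show ?thesis by (simp add: ennreal_SUP_of_nat_eq_top top_unique)
qed

lemma indicator_level:
  fixes c :: ennreal
  shows "c = (\<integral>\<^sup>+y. indicator {0..} y * indicator {y. ennreal y < c} y \<partial>lborel)"
proof (cases c)
  case (real r)
  have "(\<integral>\<^sup>+y. indicator {0..} y * indicator {y. ennreal y < c} y \<partial>lborel) =
        (\<integral>\<^sup>+y. indicator {0..<r} y \<partial>lborel)"
    using real by (intro nn_integral_cong) (auto split: split_indicator simp: ennreal_less_iff)
  also have "\<dots> = ennreal r" using real by simp
  finally show ?thesis using real by simp
next
  case top
  have "(\<integral>\<^sup>+y. indicator {0..} y * indicator {y. ennreal y < c} y \<partial>lborel) =
        (\<integral>\<^sup>+y. indicator {0::real..} y \<partial>lborel)"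
  proof -
    have "{y. ennreal y < c} = UNIV" using top by auto
    then show ?thesis by simp
  qed
  also have "\<dots> = \<infinity>" by (subst nn_integral_indicator) (auto simp: emeasure_lborel_Ici_top)
  finally show ?thesis using top by simp
qed

lemma layer_cake:
  fixes w g :: "real \<Rightarrow> ennreal"
  assumes [measurable]: "w \<in> borel_measurable borel" "g \<in> borel_measurable borel"
  shows "(\<integral>\<^sup>+x. w x * g x \<partial>lborel) =
    (\<integral>\<^sup>+y. indicator {0..} y * (\<integral>\<^sup>+x. w x * indicator {x. ennreal y < g x} x \<partial>lborel) \<partial>lborel)"
proof -
  have "(\<integral>\<^sup>+x. w x * g x \<partial>lborel) =
    (\<integral>\<^sup>+x. \<integral>\<^sup>+y. w x * (indicator {0..} y * indicator {y. ennreal y < g x} y) \<partial>lborel \<partial>lborel)"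
    by (intro nn_integral_cong) (subst nn_integral_cmult, simp, simp add: indicator_level[symmetric])
  also have "\<dots> = (\<integral>\<^sup>+y. \<integral>\<^sup>+x. w x * (indicator {0..} y * indicator {y. ennreal y < g x} y) \<partial>lborel \<partial>lborel)"
    by (rule lborel_pair.Fubini'[symmetric]) measurable
  also have "\<dots> = (\<integral>\<^sup>+y. indicator {0..} y * (\<integral>\<^sup>+x. w x * indicator {x. ennreal y < g x} x \<partial>lborel) \<partial>lborel)"
    by (intro nn_integral_cong) (subst nn_integral_cmult[symmetric], simp, auto intro!: nn_integral_cong split: split_indicator)
  finally show ?thesis .
qed

lemma borel_measurable_mono_complete:
  fixes f :: "'a::{complete_linorder, linorder_topology, second_countable_topology} \<Rightarrow> 'b::{linorder_topology, second_countable_topology}"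
  assumes "mono f"
  shows "f \<in> borel_measurable borel"
proof (rule borel_measurableI_greater)
  fix y
  define U where "U = {x. y < f x}"
  define c where "c = Inf U"
  have 1: "{c<..} \<subseteq> U"
  proof
    fix x assume "x \<in> {c<..}"
    then have "Inf U < x" by (simp add: c_def)
    then obtain u where "u \<in> U" "u < x" by (auto simp: Inf_less_iff)
    then show "x \<in> U" using assms by (auto simp: U_def mono_def intro: less_le_trans)
  qed
  have 2: "U \<subseteq> {c..}" by (auto simp: c_def intro: Inf_lower)
  have "U = {c<..} \<union> (U \<inter> {c})" using 1 2 by auto
  moreover have "U \<inter> {c} \<in> sets borel"
    by (cases "c \<in> U") (auto simp: Int_absorb1 Int_absorb2 disjoint_iff)
  ultimately have "U \<in> sets borel" by (metis borel_open open_greaterThan sets.Un)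
  then show "{x \<in> space borel. y < f x} \<in> sets borel" by (simp add: U_def)
qed

lemma three_slope:
  fixes \<Phi> :: "ennreal \<Rightarrow> ennreal"
  assumes mono: "mono \<Phi>" and cvx: "convex_ennreal \<Phi>"
    and ut: "0 \<le> u" "u < t" and tz: "t < z" and fin: "\<Phi> (ennreal z) < top"
  shows "(enn2real (\<Phi> (ennreal t)) - enn2real (\<Phi> (ennreal u))) * (z - t) \<le>
         (enn2real (\<Phi> (ennreal z)) - enn2real (\<Phi> (ennreal t))) * (t - u)"
proof -
  define f where "f = (\<lambda>x. enn2real (\<Phi> (ennreal x)))"
  have fin': "\<Phi> (ennreal x) < top" if "x \<le> z" for x
    using mono fin that by (meson ennreal_leI le_less_trans monoD)
  have eq: "\<Phi> (ennreal x) = ennreal (f x)" if "x \<le> z" for x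
    using fin'[OF that] by (simp add: f_def ennreal_enn2real_if less_top)
  define l where "l = (z - t) / (z - u)"
  have l: "0 \<le> l" "l \<le> 1" using ut tz by (auto simp: l_def field_simps)
  have lt: "l * u + (1 - l) * z = t"
  proof -
    have d: "z - u \<noteq> 0" using ut tz by simp
    have "l * (z - u) = z - t" using d by (simp add: l_def)
    moreover have "l * u + (1 - l) * z = z - l * (z - u)" by (simp add: algebra_simps)
    ultimately show ?thesis by simp
  qed
  have "\<Phi> (ennreal l * ennreal u + ennreal (1 - l) * ennreal z) \<le>
        ennreal l * \<Phi> (ennreal u) + ennreal (1 - l) * \<Phi> (ennreal z)"
  proof -
    have cv: "\<And>x y (a::real). 0 \<le> a \<Longrightarrow> a \<le> 1 \<Longrightarrow>
      \<Phi> (ennreal a * x + ennreal (1 - a) * y) \<le> ennreal a * \<Phi> x + ennreal (1 - a) * \<Phi> y"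
      using cvx unfolding convex_ennreal_def by blast
    show ?thesis by (rule cv[OF l])
  qed
  moreover have "ennreal l * ennreal u + ennreal (1 - l) * ennreal z = ennreal t"
  proof -
    have n1: "0 \<le> l * u" using l ut by simp
    have n2: "0 \<le> (1 - l) * z" using l ut tz by simp
    have "ennreal t = ennreal (l * u + (1 - l) * z)" using lt by simp
    also have "\<dots> = ennreal (l * u) + ennreal ((1 - l) * z)" by (rule ennreal_plus[OF n1 n2])
    finally have "ennreal t = ennreal (l * u) + ennreal ((1 - l) * z)" .
    then show ?thesis using l ut tz by (simp add: ennreal_mult)
  qed
  ultimately have A: "ennreal (f t) \<le> ennreal l * ennreal (f u) + ennreal (1 - l) * ennreal (f z)"
    using ut tz eq[of t] eq[of u] eq[of z] by simp
  have f0: "0 \<le> f x" for x by (simp add: f_def)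
  have B: "ennreal l * ennreal (f u) + ennreal (1 - l) * ennreal (f z) = ennreal (l * f u + (1 - l) * f z)"
    using l f0[of u] f0[of z] by (simp add: ennreal_mult ennreal_plus)
  from A B have AB: "ennreal (f t) \<le> ennreal (l * f u + (1 - l) * f z)" by simp
  have nn: "0 \<le> l * f u + (1 - l) * f z" using l f0[of u] f0[of z] by simp
  from AB have "f t \<le> l * f u + (1 - l) * f z" by (simp add: ennreal_le_iff[OF nn])
  then have C: "(z - u) * f t \<le> (z - u) * (l * f u + (1 - l) * f z)"
    using ut tz by (intro mult_left_mono) auto
  have d: "z - u \<noteq> 0" using ut tz by simp
  have D1: "(z - u) * l = z - t" using d by (simp add: l_def)
  have D2: "(z - u) * (1 - l) = t - u" using D1 by (simp add: algebra_simps)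
  have "(z - u) * (l * f u + (1 - l) * f z) = ((z - u) * l) * f u + ((z - u) * (1 - l)) * f z"
    by (simp add: algebra_simps)
  with C D1 D2 have "(z - u) * f t \<le> (z - t) * f u + (t - u) * f z" by simp
  then show ?thesis by (simp add: f_def algebra_simps)
qed

lemma ennreal_unbounded_top:
  fixes x :: ennreal
  assumes "\<And>M. M \<ge> 0 \<Longrightarrow> ennreal M \<le> x"
  shows "x = top"
proof (rule ccontr)
  assume "x \<noteq> top"
  then have e: "x = ennreal (enn2real x)" by (cases x) auto
  have l: "ennreal (enn2real x + 1) \<le> x" by (rule assms) simp
  show False
  proof -
    have "ennreal (enn2real x + 1) \<le> ennreal (enn2real x)" using e l by simp
    then have "enn2real x + 1 \<le> enn2real x" by (subst (asm) ennreal_le_iff) auto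
    then show False by simp
  qed
qed

lemma supp_line:
  fixes \<Phi> :: "ennreal \<Rightarrow> ennreal"
  assumes mono: "mono \<Phi>" and cvx: "convex_ennreal \<Phi>"
    and t: "0 < t" and w: "t < w" "\<Phi> (ennreal w) < top"
  shows "\<exists>s\<ge>0. \<forall>z. \<Phi> (ennreal t) + ennreal s * z \<le> \<Phi> z + ennreal s * ennreal t"
proof -
  define f where "f = (\<lambda>x. enn2real (\<Phi> (ennreal x)))"
  have fin': "\<Phi> (ennreal x) < top" if "x \<le> w" for x
    using mono w that by (meson ennreal_leI le_less_trans monoD)
  have eq: "\<Phi> (ennreal x) = ennreal (f x)" if "x \<le> w" for x
    using fin'[OF that] by (simp add: f_def ennreal_enn2real_if less_top)
  have f0: "0 \<le> f x" for x by (simp add: f_def)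
  have fmono: "f x \<le> f y" if "0 \<le> x" "x \<le> y" "y \<le> w" for x y
  proof -
    have "\<Phi> (ennreal x) \<le> \<Phi> (ennreal y)" using that by (intro monoD[OF mono]) simp
    then show ?thesis using eq[of x] eq[of y] that f0[of y] by (simp add: ennreal_le_iff)
  qed
  define S where "S = {(f t - f u) / (t - u) | u. 0 \<le> u \<and> u < t}"
  define s where "s = Sup S"
  have Sne: "S \<noteq> {}" using t by (auto simp: S_def)
  have ts: "(f t - f u) * (z - t) \<le> (f z - f t) * (t - u)"
    if "0 \<le> u" "u < t" "t < z" "\<Phi> (ennreal z) < top" for u z
    using three_slope[OF mono cvx that] by (simp add: f_def)
  have slope_le: "(f t - f u) / (t - u) \<le> (f z - f t) / (z - t)"
    if "0 \<le> u" "u < t" "t < z" "\<Phi> (ennreal z) < top" for u z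
  proof -
    have p1: "0 < t - u" "0 < z - t" using that by simp_all
    have "f t - f u \<le> (f z - f t) * (t - u) / (z - t)"
      by (subst pos_le_divide_eq[OF p1(2)]) (use ts[OF that] in simp)
    also have "\<dots> = (f z - f t) / (z - t) * (t - u)" by simp
    finally show ?thesis by (subst pos_divide_le_eq[OF p1(1)])
  qed
  have bdd: "bdd_above S"
    unfolding S_def bdd_above_def
  proof (intro exI ballI)
    fix x assume "x \<in> {(f t - f u) / (t - u) |u. 0 \<le> u \<and> u < t}"
    then obtain u where "x = (f t - f u) / (t - u)" "0 \<le> u" "u < t" by auto
    then show "x \<le> (f w - f t) / (w - t)" using slope_le[OF _ _ w] by simp
  qed
  have upper: "(f t - f u) / (t - u) \<le> s" if "0 \<le> u" "u < t" for u
  proof -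
    have "(f t - f u) / (t - u) \<in> S" unfolding S_def using that by blast
    then show ?thesis unfolding s_def by (rule cSup_upper[OF _ bdd])
  qed
  have s0: "0 \<le> s"
  proof -
    have "0 \<le> (f t - f 0) / (t - 0)" using fmono[of 0 t] t w by simp
    then show ?thesis using upper[of 0] t by simp
  qed
  have K1: "f t + s * z \<le> f z + s * t" if "0 \<le> z" "z < t" for z
  proof -
    have "(f t - f z) / (t - z) \<le> s" using upper that by blast
    then have "f t - f z \<le> s * (t - z)" using that by (subst (asm) pos_divide_le_eq) auto
    then show ?thesis by (simp add: algebra_simps)
  qed
  have K2: "f t + s * z \<le> f z + s * t" if "t < z" "\<Phi> (ennreal z) < top" for z
  proof -
    have "s \<le> (f z - f t) / (z - t)"
      unfolding s_def
    proof (rule cSup_least[OF Sne])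
      fix x assume "x \<in> S"
      then obtain u where "x = (f t - f u) / (t - u)" "0 \<le> u" "u < t" unfolding S_def by blast
      then show "x \<le> (f z - f t) / (z - t)" using slope_le[OF _ _ that] by simp
    qed
    then have "s * (z - t) \<le> f z - f t" using that by (subst (asm) pos_le_divide_eq) auto
    then show ?thesis by (simp add: algebra_simps)
  qed
  have fz_eq: "\<Phi> (ennreal z) = ennreal (f z)" if "\<Phi> (ennreal z) < top" for z
    using that by (simp add: f_def ennreal_enn2real_if less_top)
  have real_case: "\<Phi> (ennreal t) + ennreal s * ennreal z \<le> \<Phi> (ennreal z) + ennreal s * ennreal t"
    if z: "0 \<le> z" for z
  proof (cases "\<Phi> (ennreal z) < top")
    case False
    then have "\<Phi> (ennreal z) = top" by (metis less_top)
    then show ?thesis by simp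
  next
    case True
    have "f t + s * z \<le> f z + s * t"
    proof (cases "z < t")
      case True then show ?thesis using K1 z by blast
    next
      case False
      then show ?thesis using K2[of z] \<open>\<Phi> (ennreal z) < top\<close> by (cases "z = t") auto
    qed
    then have L: "ennreal (f t + s * z) \<le> ennreal (f z + s * t)" by (rule ennreal_leI)
    have E1: "ennreal (f t + s * z) = \<Phi> (ennreal t) + ennreal s * ennreal z"
    proof -
      have "ennreal (f t + s * z) = ennreal (f t) + ennreal (s * z)"
        by (rule ennreal_plus) (use f0 s0 z in simp_all)
      also have "ennreal (s * z) = ennreal s * ennreal z" by (rule ennreal_mult) (use s0 z in simp_all)
      also have "ennreal (f t) = \<Phi> (ennreal t)" using eq[of t] w by simp
      finally show ?thesis .
    qed
    have E2: "ennreal (f z + s * t) = \<Phi> (ennreal z) + ennreal s * ennreal t"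
    proof -
      have "ennreal (f z + s * t) = ennreal (f z) + ennreal (s * t)"
        by (rule ennreal_plus) (use f0 s0 t in simp_all)
      also have "ennreal (s * t) = ennreal s * ennreal t" by (rule ennreal_mult) (use s0 t in simp_all)
      also have "ennreal (f z) = \<Phi> (ennreal z)" using fz_eq[OF True] by simp
      finally show ?thesis .
    qed
    show ?thesis using L unfolding E1 E2 .
  qed
  have top_case: "\<Phi> (ennreal t) + ennreal s * top \<le> \<Phi> top + ennreal s * ennreal t"
  proof (cases "s = 0")
    case True
    have "\<Phi> (ennreal t) \<le> \<Phi> top" using mono by (rule monoD) simp
    then show ?thesis using True by simp
  next
    case False
    then have sp: "s > 0" using s0 by simp
    have "\<Phi> top = top"
    proof (rule ennreal_unbounded_top)
      fix M :: real assume M: "M \<ge> 0"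
      define z where "z = t + M / s + 1"
      have Ms: "0 \<le> M / s" using M sp by simp
      have zt: "t < z" "0 \<le> z" using Ms t by (simp_all add: z_def)
      have "ennreal M \<le> \<Phi> (ennreal z)"
      proof (cases "\<Phi> (ennreal z) < top")
        case True
        have "s * (z - t) = M + s" using sp by (simp add: z_def distrib_left)
        then have "M \<le> s * (z - t)" using sp by simp
        also have "s * (z - t) \<le> f z"
        proof -
          have "s * (z - t) = s * z - s * t" by (simp add: right_diff_distrib)
          then show ?thesis using K2[OF zt(1) True] f0[of t] by linarith
        qed
        finally have "ennreal M \<le> ennreal (f z)" by (rule ennreal_leI)
        then show ?thesis using fz_eq[OF True] by simp
      next
        case False
        then have "\<Phi> (ennreal z) = top" by (metis less_top)
        then show ?thesis by simp
      qed
      also have "\<dots> \<le> \<Phi> top" by (rule monoD[OF mono]) simp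
      finally show "ennreal M \<le> \<Phi> top" .
    qed
    then show ?thesis by simp
  qed
  show ?thesis
  proof (intro exI[of _ s] conjI allI s0)
    fix z :: ennreal
    show "\<Phi> (ennreal t) + ennreal s * z \<le> \<Phi> z + ennreal s * ennreal t"
    proof (cases z)
      case (real r) then show ?thesis using real_case[of r] by simp
    next
      case top then show ?thesis using top_case by simp
    qed
  qed
qed

lemma avg_const:
  "ennreal (1/(2*pi)) * (\<integral>\<^sup>+\<theta>. a * indicator {0..2*pi} \<theta> \<partial>lborel) = a"
proof -
  have "(\<integral>\<^sup>+\<theta>. a * indicator {0..2*pi} \<theta> \<partial>lborel) = a * ennreal (2*pi)"
    by (subst nn_integral_cmult_indicator) auto
  moreover have "ennreal (1/(2*pi)) * ennreal (2*pi) = 1" by (simp flip: ennreal_mult)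
  ultimately show ?thesis by (metis mult.commute mult.left_commute mult_1_right)
qed

lemma jensen_lite:
  fixes \<Phi> :: "ennreal \<Rightarrow> ennreal" and h :: "real \<Rightarrow> ennreal"
  assumes mono: "mono \<Phi>" and cvx: "convex_ennreal \<Phi>"
    and hm[measurable]: "h \<in> borel_measurable borel" and t0: "0 \<le> t"
    and lt: "ennreal t < ennreal (1/(2*pi)) * (\<integral>\<^sup>+\<theta>. h \<theta> * indicator {0..2*pi} \<theta> \<partial>lborel)"
  shows "\<Phi> (ennreal t) \<le> ennreal (1/(2*pi)) * (\<integral>\<^sup>+\<theta>. \<Phi> (h \<theta>) * indicator {0..2*pi} \<theta> \<partial>lborel)"
proof -
  have [measurable]: "\<Phi> \<in> borel_measurable borel" by (rule borel_measurable_mono_complete[OF mono])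
  define c where "c = ennreal (1/(2*pi))"
  have c0: "c \<noteq> 0" by (simp add: c_def)
  show ?thesis
  proof (cases "t = 0 \<or> (\<exists>w>t. \<Phi> (ennreal w) < top)")
    case True
    obtain s where s0: "s \<ge> 0" and sl: "\<And>z. \<Phi> (ennreal t) + ennreal s * z \<le> \<Phi> z + ennreal s * ennreal t"
    proof (cases "t = 0")
      case True
      have "\<Phi> (ennreal t) + ennreal 0 * z \<le> \<Phi> z + ennreal 0 * ennreal t" for z
      proof -
        have "\<Phi> (ennreal t) \<le> \<Phi> z" using True by (intro monoD[OF mono]) simp
        then show ?thesis by simp
      qed
      then show ?thesis using that[of 0] by simp
    next
      case False
      with \<open>t = 0 \<or> _\<close> obtain w where "t < w" "\<Phi> (ennreal w) < top" by blast
      then show ?thesis using supp_line[OF mono cvx _ \<open>t < w\<close>] False t0 that by force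
    qed
    let ?I = "\<lambda>k. \<integral>\<^sup>+\<theta>. k \<theta> * indicator {0..2*pi} \<theta> \<partial>lborel"
    have "?I (\<lambda>\<theta>. \<Phi> (ennreal t) + ennreal s * h \<theta>) \<le> ?I (\<lambda>\<theta>. \<Phi> (h \<theta>) + ennreal s * ennreal t)"
      by (intro nn_integral_mono mult_right_mono sl) simp
    moreover have "?I (\<lambda>\<theta>. \<Phi> (ennreal t) + ennreal s * h \<theta>) =
        ?I (\<lambda>\<theta>. \<Phi> (ennreal t)) + ennreal s * ?I h"
      by (simp add: distrib_right nn_integral_add nn_integral_cmult mult.assoc)
    moreover have "?I (\<lambda>\<theta>. \<Phi> (h \<theta>) + ennreal s * ennreal t) =
        ?I (\<lambda>\<theta>. \<Phi> (h \<theta>)) + ?I (\<lambda>\<theta>. ennreal s * ennreal t)"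
      by (simp add: distrib_right nn_integral_add)
    ultimately have "c * (?I (\<lambda>\<theta>. \<Phi> (ennreal t)) + ennreal s * ?I h) \<le>
         c * (?I (\<lambda>\<theta>. \<Phi> (h \<theta>)) + ?I (\<lambda>\<theta>. ennreal s * ennreal t))"
      by (intro mult_left_mono) auto
    then have A: "\<Phi> (ennreal t) + ennreal s * (c * ?I h) \<le> c * ?I (\<lambda>\<theta>. \<Phi> (h \<theta>)) + ennreal s * ennreal t"
      using avg_const[of "\<Phi> (ennreal t)"] avg_const[of "ennreal s * ennreal t"]
      by (simp add: c_def distrib_left mult.left_commute)
    have "ennreal s * ennreal t \<le> ennreal s * (c * ?I h)"
      using lt by (intro mult_left_mono) (auto simp: c_def)
    then have "\<Phi> (ennreal t) + ennreal s * ennreal t \<le> c * ?I (\<lambda>\<theta>. \<Phi> (h \<theta>)) + ennreal s * ennreal t"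
      using A by (meson add_left_mono order_trans)
    then have "ennreal s * ennreal t + \<Phi> (ennreal t) \<le> ennreal s * ennreal t + c * ?I (\<lambda>\<theta>. \<Phi> (h \<theta>))"
      by (simp add: add.commute)
    moreover have "ennreal s * ennreal t \<noteq> top" by (simp add: ennreal_mult_eq_top_iff)
    ultimately show ?thesis
      by (simp add: ennreal_add_left_cancel_le c_def)
  next
    case False
    then have tp: "t > 0" and inf: "\<And>w. w > t \<Longrightarrow> \<Phi> (ennreal w) = top"
      using t0 by (auto simp: less_top[symmetric])
    show ?thesis
    proof (cases "(\<integral>\<^sup>+\<theta>. \<Phi> (h \<theta>) * indicator {0..2*pi} \<theta> \<partial>lborel) = top")
      case True
      then show ?thesis by (simp add: ennreal_mult_top)
    next
      case False
      have "AE \<theta> in lborel. \<Phi> (h \<theta>) * indicator {0..2*pi} \<theta> \<noteq> \<infinity>"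
        by (rule nn_integral_noteq_infinite) (use False in simp_all)
      then have AE: "AE \<theta> in lborel. h \<theta> * indicator {0..2*pi} \<theta> \<le> ennreal t * indicator {0..2*pi} \<theta>"
      proof eventually_elim
        case (elim \<theta>)
        show ?case
        proof (cases "\<theta> \<in> {0..2*pi}")
          case True
          with elim have fin: "\<Phi> (h \<theta>) \<noteq> top" by simp
          have "h \<theta> \<le> ennreal t"
          proof (rule ccontr)
            assume "\<not> h \<theta> \<le> ennreal t"
            then have gt: "ennreal t < h \<theta>" by simp
            show False
            proof (cases "h \<theta>")
              case (real w)
              then have "t < w" using gt t0 by (simp add: ennreal_less_iff)
              then show False using inf[of w] fin real by simp
            next
              case top
              have "\<Phi> (ennreal (t + 1)) \<le> \<Phi> top" by (rule monoD[OF mono]) simp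
              then show False using inf[of "t+1"] fin top by (simp add: top_unique)
            qed
          qed
          then show ?thesis using True by simp
        qed simp
      qed
      have Ile: "(\<integral>\<^sup>+\<theta>. h \<theta> * indicator {0..2*pi} \<theta> \<partial>lborel) \<le> (\<integral>\<^sup>+\<theta>. ennreal t * indicator {0..2*pi} \<theta> \<partial>lborel)"
        by (rule nn_integral_mono_AE[OF AE])
      then have "ennreal (1/(2*pi)) * (\<integral>\<^sup>+\<theta>. h \<theta> * indicator {0..2*pi} \<theta> \<partial>lborel) \<le> ennreal t"
      proof -
        have "ennreal (1/(2*pi)) * (\<integral>\<^sup>+\<theta>. h \<theta> * indicator {0..2*pi} \<theta> \<partial>lborel) \<le>
           ennreal (1/(2*pi)) * (\<integral>\<^sup>+\<theta>. ennreal t * indicator {0..2*pi} \<theta> \<partial>lborel)"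
          by (rule mult_left_mono[OF Ile zero_le])
        then show ?thesis by (simp only: avg_const)
      qed
      then have False using lt leD by blast
      then show ?thesis ..
    qed
  qed
qed

lemma inv_swap:
  fixes a :: ennreal and y :: real
  assumes "0 \<le> y"
  shows "(ennreal y < 1 / a) \<longleftrightarrow> (a < inverse (ennreal y))"
proof (cases a)
  case (real a')
  show ?thesis
  proof (cases "a' = 0")
    case True
    then show ?thesis using real by (simp add: divide_ennreal_def ennreal_inverse_positive)
  next
    case False
    then have a': "a' > 0" using real by simp
    have 1: "1 / a = ennreal (1 / a')"
      using real a' by (simp add: divide_ennreal_def inverse_ennreal divide_inverse)
    show ?thesis
    proof (cases "y = 0")
      case True
      then show ?thesis using 1 a' real by simp
    next
      case False
      then have y: "y > 0" using assms by simp
      have "ennreal y < ennreal (1/a') \<longleftrightarrow> y < 1/a'" using y by (simp add: ennreal_less_iff)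
      also have "\<dots> \<longleftrightarrow> a' < 1/y" using y a' by (simp add: field_simps)
      also have "\<dots> \<longleftrightarrow> ennreal a' < ennreal (1/y)" using y a' by (simp add: ennreal_less_iff)
      finally show ?thesis using 1 real y by (simp add: inverse_ennreal divide_inverse)
    qed
  qed
next
  case top
  then show ?thesis by simp
qed

lemma gen_inv_mono: "mono (gen_inv \<Phi>)"
  unfolding gen_inv_def mono_def by (auto intro!: Inf_superset_mono)

lemma gen_inv_less:
  assumes "gen_inv \<Phi> a < X"
  shows "\<exists>t. a \<le> \<Phi> t \<and> t < X"
  using assms unfolding gen_inv_def by (auto simp: Inf_less_iff)

lemma circ_mean_measurable[measurable]:
  assumes [measurable]: "Q \<in> borel_measurable borel"
  shows "circ_mean Q \<in> borel_measurable borel"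
  unfolding circ_mean_def by measurable

definition nuint :: "real set \<Rightarrow> ennreal" where
  "nuint A = (\<integral>\<^sup>+r. indicator {0<..<1} r * ennreal (1/r) * indicator A r \<partial>lborel)"

definition kapint :: "ennreal \<Rightarrow> real set \<Rightarrow> ennreal" where
  "kapint N A = (\<integral>\<^sup>+\<tau>. indicator {\<tau>. N < ennreal \<tau>} \<tau> * ennreal (1/(2*\<tau>)) * indicator A \<tau> \<partial>lborel)"

lemma ball_borel[measurable]: "ball (0::complex) 1 \<in> sets borel"
  by simp

lemma polar_bound:
  fixes F :: "complex \<Rightarrow> ennreal"
  assumes [measurable]: "F \<in> borel_measurable borel"
  shows "(\<integral>\<^sup>+r. indicator {0<..<1} r * (ennreal (2*pi) * ennreal r * circ_mean F r) \<partial>lborel)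
     \<le> (\<integral>\<^sup>+z\<in>ball 0 1. F z \<partial>lborel)"
proof -
  have "(\<integral>\<^sup>+z\<in>ball 0 1. F z \<partial>lborel) = (\<integral>\<^sup>+\<rho>. ennreal \<rho> * indicator {0..} \<rho> *
        (\<integral>\<^sup>+\<theta>. (F (of_real \<rho> * cis \<theta>) * indicator (ball 0 1) (of_real \<rho> * cis \<theta>)) * indicator {0..2*pi} \<theta> \<partial>lborel) \<partial>lborel)"
    by (rule polar) measurable
  also have "\<dots> \<ge> (\<integral>\<^sup>+r. indicator {0<..<1} r * (ennreal (2*pi) * ennreal r * circ_mean F r) \<partial>lborel)"
  proof (rule nn_integral_mono)
    fix r :: real
    show "indicator {0<..<1} r * (ennreal (2*pi) * ennreal r * circ_mean F r) \<le>
      ennreal r * indicator {0..} r *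
        (\<integral>\<^sup>+\<theta>. (F (of_real r * cis \<theta>) * indicator (ball 0 1) (of_real r * cis \<theta>)) * indicator {0..2*pi} \<theta> \<partial>lborel)"
    proof (cases "r \<in> {0<..<1}")
      case True
      have nb: "of_real r * cis \<theta> \<in> ball 0 1" for \<theta>
        using True by (simp add: norm_mult)
      have c: "ennreal (2*pi) * ennreal (1/(2*pi)) = 1" by (simp flip: ennreal_mult)
      have "ennreal (2*pi) * circ_mean F r = (\<integral>\<^sup>+\<theta>. F (of_real r * cis \<theta>) * indicator {0..2*pi} \<theta> \<partial>lborel)"
        unfolding circ_mean_def by (simp add: mult.assoc[symmetric] c)
      then show ?thesis using True nb by (simp add: mult.assoc mult.left_commute)
    qed simp
  qed
  finally show ?thesis .
qed

lemma ennreal_le_div_aux: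
  fixes X :: ennreal
  assumes "X * ennreal k \<le> ennreal N" "0 < k"
  shows "X \<le> ennreal (N / k)"
proof (cases X)
  case (real x)
  then have "ennreal (x * k) \<le> ennreal N" using assms by (simp add: ennreal_mult)
  then have "x * k \<le> N \<or> x * k \<le> 0" by (auto simp: ennreal_le_iff2)
  then have "x \<le> N / k \<or> x * k \<le> 0" using assms(2) by (simp add: pos_le_divide_eq)
  then show ?thesis using real assms(2)
    by (auto intro: ennreal_leI simp: mult_le_0_iff)
next
  case top
  then show ?thesis using assms by (simp add: ennreal_top_mult top_unique)
qed

lemma nn_integral_inv_Icc:
  assumes "0 < b" "b \<le> 1"
  shows "(\<integral>\<^sup>+r. ennreal (1/r) * indicator {b..1} r \<partial>lborel) = ennreal (- ln b)"
proof -
  have "(\<integral>\<^sup>+r. ennreal (1/r) * indicator {b..1} r \<partial>lborel) = ennreal (ln 1 - ln b)"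
    by (rule nn_integral_FTC_Icc) (use assms in \<open>auto intro!: derivative_eq_intros simp: field_simps\<close>)
  then show ?thesis by simp
qed

lemma lemmaB:
  fixes F :: "complex \<Rightarrow> ennreal"
  assumes [measurable]: "F \<in> borel_measurable borel"
    and NF: "(\<integral>\<^sup>+z\<in>ball 0 1. F z \<partial>lborel) = ennreal Nr"
    and v: "0 < v" and b: "0 < b" "b < 1"
  shows "ennreal (- ln b) \<le> nuint {r. circ_mean F r < ennreal v} + ennreal (Nr / (2 * pi * v * b^2))"
proof -
  define S where "S = {r. b \<le> r \<and> r < 1 \<and> ennreal v \<le> circ_mean F r}"
  have [measurable]: "S \<in> sets borel" unfolding S_def by measurable
  have "ennreal (- ln b) = (\<integral>\<^sup>+r. ennreal (1/r) * indicator {b..1} r \<partial>lborel)"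
    using b by (simp add: nn_integral_inv_Icc)
  also have "\<dots> \<le> (\<integral>\<^sup>+r. indicator {0<..<1} r * ennreal (1/r) * indicator {r. circ_mean F r < ennreal v} r
        + ennreal (1/r) * indicator S r \<partial>lborel)"
  proof (rule nn_integral_mono_AE)
    show "AE r in lborel. ennreal (1/r) * indicator {b..1} r \<le>
      indicator {0<..<1} r * ennreal (1/r) * indicator {r. circ_mean F r < ennreal v} r
        + ennreal (1/r) * indicator S r"
      using AE_lborel_singleton[of 1]
    proof eventually_elim
      case (elim r)
      show ?case
      proof (cases "r \<in> {b..1}")
        case True
        with elim have r: "b \<le> r" "r < 1" by auto
        show ?thesis
        proof (cases "circ_mean F r < ennreal v")
          case True then show ?thesis using r b by (simp add: indicator_def)
        next
          case False then have "r \<in> S" using r by (simp add: S_def not_less)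
          then show ?thesis using r by (simp add: indicator_def)
        qed
      qed simp
    qed
  qed
  also have "\<dots> = nuint {r. circ_mean F r < ennreal v} + (\<integral>\<^sup>+r. ennreal (1/r) * indicator S r \<partial>lborel)"
    unfolding nuint_def by (rule nn_integral_add) measurable
  also have "(\<integral>\<^sup>+r. ennreal (1/r) * indicator S r \<partial>lborel) \<le> ennreal (Nr / (2 * pi * v * b^2))"
  proof (rule ennreal_le_div_aux)
    show "0 < 2 * pi * v * b^2" using v b by simp
    have "(\<integral>\<^sup>+r. ennreal (1/r) * indicator S r \<partial>lborel) * ennreal (2 * pi * v * b^2) =
          (\<integral>\<^sup>+r. ennreal (1/r) * indicator S r * ennreal (2 * pi * v * b^2) \<partial>lborel)"
      by (rule nn_integral_multc[symmetric]) measurable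
    also have "\<dots> \<le> (\<integral>\<^sup>+r. indicator {0<..<1} r * (ennreal (2*pi) * ennreal r * circ_mean F r) \<partial>lborel)"
    proof (rule nn_integral_mono)
      fix r
      show "ennreal (1/r) * indicator S r * ennreal (2 * pi * v * b^2) \<le>
            indicator {0<..<1} r * (ennreal (2*pi) * ennreal r * circ_mean F r)"
      proof (cases "r \<in> S")
        case True
        then have r: "b \<le> r" "r < 1" "ennreal v \<le> circ_mean F r" by (auto simp: S_def)
        have rp: "0 < r" using r b by simp
        have "b^2 \<le> r^2" using r b by (intro power_mono) auto
        then have "1/r * (2 * pi * v * b^2) \<le> 2 * pi * v * r"
          using rp v by (simp add: field_simps power2_eq_square)
        then have "ennreal (1/r) * ennreal (2 * pi * v * b^2) \<le> ennreal (2*pi) * ennreal r * ennreal v"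
          using rp v by (simp add: ennreal_mult'[symmetric] ennreal_leI mult.commute mult.left_commute)
        also have "\<dots> \<le> ennreal (2*pi) * ennreal r * circ_mean F r"
          by (intro mult_left_mono r(3)) auto
        finally show ?thesis using True rp r by (simp add: S_def)
      qed simp
    qed
    also have "\<dots> \<le> ennreal Nr" using polar_bound[of F] NF by simp
    finally show "(\<integral>\<^sup>+r. ennreal (1/r) * indicator S r \<partial>lborel) * ennreal (2 * pi * v * b^2) \<le> ennreal Nr" .
  qed
  finally show ?thesis by (simp add: add_left_mono)
qed

lemma nuint_mono: "A \<subseteq> B \<Longrightarrow> nuint A \<le> nuint B"
  unfolding nuint_def
  by (intro nn_integral_mono mult_left_mono) (auto split: split_indicator)

lemma ln_pi_ge_1: "1 \<le> ln pi"
proof -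
  have "exp 1 \<le> pi" using e_less_272 pi_gt3 by linarith
  then have "ln (exp 1) \<le> ln pi" by (subst ln_le_cancel_iff) auto
  then show ?thesis by simp
qed

lemma nuint_top:
  fixes F :: "complex \<Rightarrow> ennreal"
  assumes [measurable]: "F \<in> borel_measurable borel"
    and NF: "(\<integral>\<^sup>+z\<in>ball 0 1. F z \<partial>lborel) = ennreal Nr" and Nr0: "0 \<le> Nr"
  shows "nuint {r. circ_mean F r < top} = top"
proof (rule ennreal_unbounded_top)
  fix M :: real assume M: "0 \<le> M"
  define b where "b = exp (-(M+1))"
  have b: "0 < b" "b < 1" using M by (auto simp: b_def)
  define v where "v = max 1 (Nr / (2 * pi * b^2))"
  have v: "0 < v" "Nr / (2 * pi * b^2) \<le> v" by (auto simp: v_def)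
  have q: "Nr / (2 * pi * v * b^2) \<le> 1"
  proof -
    have "Nr \<le> v * (2 * pi * b^2)" using v b by (simp add: pos_divide_le_eq)
    moreover have "v * (2 * pi * b^2) = 2 * pi * v * b^2" by (simp add: algebra_simps)
    moreover have "0 < 2 * pi * v * b^2" using v b by simp
    ultimately show ?thesis by (subst pos_divide_le_eq) simp_all
  qed
  have "ennreal (M + 1) \<le> nuint {r. circ_mean F r < ennreal v} + ennreal (Nr / (2 * pi * v * b^2))"
    using lemmaB[OF _ NF v(1) b] by (simp add: b_def add.commute)
  also have "\<dots> \<le> nuint {r. circ_mean F r < top} + 1"
    by (intro add_mono nuint_mono) (use q in \<open>auto simp: ennreal_le_1 intro: less_le_trans\<close>)
  finally have "1 + ennreal M \<le> 1 + nuint {r. circ_mean F r < top}"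
    using M by (simp add: ennreal_plus add.commute)
  then show "ennreal M \<le> nuint {r. circ_mean F r < top}"
    by (simp add: ennreal_add_left_cancel_le)
qed

lemma nuint_zeroN:
  fixes F :: "complex \<Rightarrow> ennreal"
  assumes [measurable]: "F \<in> borel_measurable borel"
    and NF: "(\<integral>\<^sup>+z\<in>ball 0 1. F z \<partial>lborel) = 0" and v: "0 < v"
  shows "nuint {r. circ_mean F r < ennreal v} = top"
proof (rule ennreal_unbounded_top)
  fix M :: real assume M: "0 \<le> M"
  define b where "b = exp (-(M+1))"
  have b: "0 < b" "b < 1" using M by (auto simp: b_def)
  have "ennreal (1 + M) \<le> nuint {r. circ_mean F r < ennreal v}"
    using lemmaB[OF _ _ v b, of F 0] NF by (simp add: b_def)
  then have "ennreal (M + 1) \<le> nuint {r. circ_mean F r < ennreal v}" by (metis add.commute)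
  moreover have "ennreal M \<le> ennreal (M + 1)" by (rule ennreal_leI) simp
  ultimately show "ennreal M \<le> nuint {r. circ_mean F r < ennreal v}" by (meson order_trans)
qed

lemma lemmaK:
  fixes F :: "complex \<Rightarrow> ennreal"
  assumes Fm[measurable]: "F \<in> borel_measurable borel"
    and NF: "(\<integral>\<^sup>+z\<in>ball 0 1. F z \<partial>lborel) = ennreal Nr" and Nr0: "0 \<le> Nr"
  shows "kapint (ennreal Nr) {\<tau>. ennreal \<tau> \<le> V} \<le> nuint {r. circ_mean F r < V}"
proof (cases "nuint {r. circ_mean F r < V} = top")
  case True then show ?thesis by simp
next
  case nt: False
  show ?thesis
  proof (cases "V \<le> ennreal Nr")
    case True
    have "kapint (ennreal Nr) {\<tau>. ennreal \<tau> \<le> V} = 0"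
      unfolding kapint_def
    proof -
      have z: "\<And>\<tau>. indicator {\<tau>. ennreal Nr < ennreal \<tau>} \<tau> * ennreal (1/(2*\<tau>)) * indicator {\<tau>. ennreal \<tau> \<le> V} \<tau> = (0::ennreal)"
        using True by (auto split: split_indicator dest: less_le_trans)
      show "(\<integral>\<^sup>+\<tau>. indicator {\<tau>. ennreal Nr < ennreal \<tau>} \<tau> * ennreal (1/(2*\<tau>)) * indicator {\<tau>. ennreal \<tau> \<le> V} \<tau> \<partial>lborel) = 0"
        by (simp only: z) simp
    qed
    then show ?thesis by simp
  next
    case False
    then have NV: "ennreal Nr < V" by simp
    have Vt: "V \<noteq> top"
      using nt nuint_top[OF Fm NF Nr0] by auto
    then obtain v where Vv: "V = ennreal v" and v0: "0 \<le> v" by (cases V) auto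
    have Nv: "Nr < v" using NV Vv v0 Nr0 by (simp add: ennreal_less_iff)
    have vp: "0 < v" using Nv Nr0 by simp
    show ?thesis
    proof (cases "Nr = 0")
      case True
      then show ?thesis using nuint_zeroN[OF Fm _ vp] NF nt Vv by simp
    next
      case False
      then have Np: "0 < Nr" using Nr0 by simp
      define D where "D = (ln v - ln Nr) / 2"
      have "kapint (ennreal Nr) {\<tau>. ennreal \<tau> \<le> V} \<le> (\<integral>\<^sup>+\<tau>. ennreal (1/(2*\<tau>)) * indicator {Nr..v} \<tau> \<partial>lborel)"
        unfolding kapint_def
      proof (rule nn_integral_mono)
        fix \<tau> :: real
        show "indicator {\<tau>. ennreal Nr < ennreal \<tau>} \<tau> * ennreal (1/(2*\<tau>)) * indicator {\<tau>. ennreal \<tau> \<le> V} \<tau>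
              \<le> ennreal (1/(2*\<tau>)) * indicator {Nr..v} \<tau>"
        proof (cases "ennreal Nr < ennreal \<tau> \<and> ennreal \<tau> \<le> V")
          case True
          then have "Nr < \<tau>" using Nr0 by (simp add: ennreal_less_iff)
          moreover have "\<tau> \<le> v" using True Vv v0 \<open>Nr < \<tau>\<close> Nr0 by (simp add: ennreal_le_iff)
          ultimately show ?thesis using True by (simp add: indicator_def)
        next
          case False then show ?thesis by (auto simp: indicator_def)
        qed
      qed
      also have "\<dots> = ennreal (ln v / 2 - ln Nr / 2)"
        by (rule nn_integral_FTC_Icc) (use Np Nv in \<open>auto intro!: derivative_eq_intros simp: field_simps\<close>)
      also have "\<dots> = ennreal D" by (simp add: D_def diff_divide_distrib)
      also have "ennreal D \<le> nuint {r. circ_mean F r < V}"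
      proof -
        define b where "b = sqrt (Nr / (pi * v))"
        have q: "Nr / (pi * v) < 1" using Np Nv pi_gt3 by (simp add: divide_less_eq) (smt (verit) mult_less_cancel_right2 vp)
        have b: "0 < b" "b < 1" using Np vp q by (auto simp: b_def real_sqrt_lt_1_iff)
        have b2: "b^2 = Nr / (pi * v)" using Np vp by (simp add: b_def)
        have h: "Nr / (2 * pi * v * b^2) = 1/2" using Np vp b2 by (simp add: field_simps)
        have lb: "- ln b = D + ln pi / 2"
        proof -
          have "ln b = ln (Nr / (pi * v)) / 2" using Np vp by (simp add: b_def ln_sqrt)
          also have "\<dots> = (ln Nr - ln pi - ln v) / 2" using Np vp by (simp add: ln_div ln_mult)
          finally show ?thesis by (simp add: D_def field_simps)
        qed
        have D0: "0 \<le> D" using Np Nv by (simp add: D_def)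
        have "ennreal D + ennreal (1/2) = ennreal (D + 1/2)"
          by (rule ennreal_plus[symmetric]) (use D0 in simp_all)
        also have "\<dots> \<le> ennreal (- ln b)" using ln_pi_ge_1 by (intro ennreal_leI) (simp add: lb)
        also have "\<dots> \<le> nuint {r. circ_mean F r < ennreal v} + ennreal (1/2)"
          using lemmaB[OF Fm NF vp b] h by simp
        finally have "ennreal (1/2) + ennreal D \<le> ennreal (1/2) + nuint {r. circ_mean F r < ennreal v}"
          by (simp add: add.commute)
        then show ?thesis by (simp add: ennreal_add_left_cancel_le Vv)
      qed
      finally show ?thesis .
    qed
  qed
qed

lemma kapint_mono: "A \<subseteq> B \<Longrightarrow> kapint N A \<le> kapint N B"
  unfolding kapint_def
  by (intro nn_integral_mono mult_left_mono) (auto split: split_indicator)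

lemma inv_mult_pos:
  fixes a :: real and b :: ennreal
  assumes "0 < a"
  shows "1 / (ennreal a * b) = ennreal (1/a) * (1 / b)"
proof -
  have "inverse (ennreal a * b) = inverse (ennreal a) * inverse b"
    by (rule ennreal_inverse_mult') (use assms in auto)
  then show ?thesis using assms by (simp add: divide_ennreal_def inverse_ennreal divide_inverse)
qed

lemma core:
  fixes P :: "complex \<Rightarrow> ennreal" and \<Phi> :: "ennreal \<Rightarrow> ennreal"
  assumes Pm[measurable]: "P \<in> borel_measurable borel"
    and mono: "mono \<Phi>" and cvx: "convex_ennreal \<Phi>"
    and NF: "(\<integral>\<^sup>+z\<in>ball 0 1. \<Phi> (P z) \<partial>lborel) = ennreal Nr" and Nr0: "0 \<le> Nr"
  shows "(1/2) * (\<integral>\<^sup>+\<tau>\<in>{\<tau>::real. ennreal Nr < ennreal \<tau>}. 1 / (ennreal \<tau> * gen_inv \<Phi> (ennreal \<tau>)) \<partial>lborel)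
     \<le> (\<integral>\<^sup>+r\<in>{0<..<1}. 1 / (ennreal r * circ_mean P r) \<partial>lborel)"
proof -
  have Phim[measurable]: "\<Phi> \<in> borel_measurable borel" by (rule borel_measurable_mono_complete[OF mono])
  have Hm[measurable]: "gen_inv \<Phi> \<in> borel_measurable borel"
    by (rule borel_measurable_mono_complete[OF gen_inv_mono])
  define F where "F = (\<lambda>z. \<Phi> (P z))"
  have Fm[measurable]: "F \<in> borel_measurable borel" unfolding F_def by measurable
  define w where "w = (\<lambda>r::real. indicator {0<..<1} r * ennreal (1/r))"
  define g where "g = (\<lambda>r. 1 / circ_mean P r)"
  define kw where "kw = (\<lambda>\<tau>::real. indicator {\<tau>. ennreal Nr < ennreal \<tau>} \<tau> * ennreal (1/(2*\<tau>)))"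
  define h where "h = (\<lambda>\<tau>::real. 1 / gen_inv \<Phi> (ennreal \<tau>))"
  have [measurable]: "w \<in> borel_measurable borel" "g \<in> borel_measurable borel"
    "kw \<in> borel_measurable borel" "h \<in> borel_measurable borel"
    unfolding w_def g_def kw_def h_def by measurable
  have E1: "(\<integral>\<^sup>+r\<in>{0<..<1}. 1 / (ennreal r * circ_mean P r) \<partial>lborel) = (\<integral>\<^sup>+r. w r * g r \<partial>lborel)"
    by (intro nn_integral_cong) (auto simp: w_def g_def inv_mult_pos indicator_def)
  have E2: "(1/2) * (\<integral>\<^sup>+\<tau>\<in>{\<tau>::real. ennreal Nr < ennreal \<tau>}. 1 / (ennreal \<tau> * gen_inv \<Phi> (ennreal \<tau>)) \<partial>lborel)
      = (\<integral>\<^sup>+\<tau>. kw \<tau> * h \<tau> \<partial>lborel)"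
  proof -
    have "(1/2) * (\<integral>\<^sup>+\<tau>\<in>{\<tau>::real. ennreal Nr < ennreal \<tau>}. 1 / (ennreal \<tau> * gen_inv \<Phi> (ennreal \<tau>)) \<partial>lborel)
      = (\<integral>\<^sup>+\<tau>. (1/2) * (1 / (ennreal \<tau> * gen_inv \<Phi> (ennreal \<tau>)) * indicator {\<tau>::real. ennreal Nr < ennreal \<tau>} \<tau>) \<partial>lborel)"
      by (rule nn_integral_cmult[symmetric]) measurable
    also have "\<dots> = (\<integral>\<^sup>+\<tau>. kw \<tau> * h \<tau> \<partial>lborel)"
    proof (intro nn_integral_cong)
      fix \<tau> :: real
      show "(1/2) * (1 / (ennreal \<tau> * gen_inv \<Phi> (ennreal \<tau>)) * indicator {\<tau>::real. ennreal Nr < ennreal \<tau>} \<tau>) = kw \<tau> * h \<tau>"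
      proof (cases "ennreal Nr < ennreal \<tau>")
        case True
        then have tp: "0 < \<tau>" using Nr0 by (metis ennreal_less_iff ennreal_less_zero_iff le_less_trans not_less)
        have half: "(1/2::ennreal) = ennreal (1/2)" by (simp add: divide_ennreal_def)
        have "(1/2::ennreal) * (1 / (ennreal \<tau> * gen_inv \<Phi> (ennreal \<tau>))) =
              ennreal (1/2) * ennreal (1/\<tau>) * (1 / gen_inv \<Phi> (ennreal \<tau>))"
          by (simp add: half inv_mult_pos[OF tp] mult.assoc)
        also have "ennreal (1/2) * ennreal (1/\<tau>) = ennreal (1/(2*\<tau>))"
          using tp by (subst ennreal_mult[symmetric]) auto
        finally show ?thesis using True by (simp add: kw_def h_def)
      next
        case False then show ?thesis by (simp add: kw_def)
      qed
    qed
    finally show ?thesis .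
  qed
  have level: "kapint (ennreal Nr) {\<tau>. ennreal y < h \<tau>} \<le> nuint {r. ennreal y < g r}" if y: "0 \<le> y" for y
  proof -
    define X where "X = inverse (ennreal y)"
    define V where "V = (SUP t\<in>{t. 0 \<le> t \<and> ennreal t < X}. \<Phi> (ennreal t))"
    have "{\<tau>. ennreal y < h \<tau>} \<subseteq> {\<tau>. ennreal \<tau> \<le> V}"
    proof
      fix \<tau> assume "\<tau> \<in> {\<tau>. ennreal y < h \<tau>}"
      then have "gen_inv \<Phi> (ennreal \<tau>) < X" using inv_swap[OF y] by (simp add: h_def X_def)
      then obtain t where t: "ennreal \<tau> \<le> \<Phi> t" "t < X" using gen_inv_less by blast
      then have "t \<noteq> top" using top.not_eq_extremum by fastforce
      then obtain t' where t': "t = ennreal t'" "0 \<le> t'" by (cases t) auto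
      have "\<Phi> (ennreal t') \<le> V" unfolding V_def by (rule SUP_upper) (use t t' in auto)
      then have "\<Phi> t \<le> V" using t' by simp
      then show "\<tau> \<in> {\<tau>. ennreal \<tau> \<le> V}" using t by auto
    qed
    then have "kapint (ennreal Nr) {\<tau>. ennreal y < h \<tau>} \<le> kapint (ennreal Nr) {\<tau>. ennreal \<tau> \<le> V}"
      by (rule kapint_mono)
    also have "\<dots> \<le> nuint {r. circ_mean F r < V}"
      using lemmaK[OF Fm _ Nr0] NF by (simp add: F_def)
    also have "\<dots> \<le> nuint {r. ennreal y < g r}"
    proof (rule nuint_mono, rule subsetI)
      fix r assume "r \<in> {r. circ_mean F r < V}"
      then obtain t where t: "0 \<le> t" "ennreal t < X" "circ_mean F r < \<Phi> (ennreal t)"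
        unfolding V_def by (auto simp: less_SUP_iff)
      have "circ_mean P r \<le> ennreal t"
      proof (rule ccontr)
        assume "\<not> circ_mean P r \<le> ennreal t"
        then have "ennreal t < ennreal (1/(2*pi)) * (\<integral>\<^sup>+\<theta>. P (of_real r * cis \<theta>) * indicator {0..2*pi} \<theta> \<partial>lborel)"
          by (simp add: circ_mean_def not_le)
        from jensen_lite[OF mono cvx _ t(1) this]
        have "\<Phi> (ennreal t) \<le> circ_mean F r" by (simp add: circ_mean_def F_def)
        then show False using t(3) by simp
      qed
      then have "circ_mean P r < X" using t(2) by simp
      then show "r \<in> {r. ennreal y < g r}" using inv_swap[OF y] by (simp add: g_def X_def)
    qed
    finally show ?thesis .
  qed
  have "(\<integral>\<^sup>+\<tau>. kw \<tau> * h \<tau> \<partial>lborel) =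
    (\<integral>\<^sup>+y. indicator {0..} y * (\<integral>\<^sup>+x. kw x * indicator {x. ennreal y < h x} x \<partial>lborel) \<partial>lborel)"
    by (rule layer_cake) measurable
  also have "\<dots> \<le> (\<integral>\<^sup>+y. indicator {0..} y * (\<integral>\<^sup>+x. w x * indicator {x. ennreal y < g x} x \<partial>lborel) \<partial>lborel)"
  proof (rule nn_integral_mono)
    fix y :: real
    show "indicator {0..} y * (\<integral>\<^sup>+x. kw x * indicator {x. ennreal y < h x} x \<partial>lborel) \<le>
          indicator {0..} y * (\<integral>\<^sup>+x. w x * indicator {x. ennreal y < g x} x \<partial>lborel)"
    proof (cases "0 \<le> y")
      case True
      then show ?thesis using level[OF True] by (simp add: kapint_def nuint_def kw_def w_def)
    qed simp
  qed
  also have "\<dots> = (\<integral>\<^sup>+r. w r * g r \<partial>lborel)"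
    by (rule layer_cake[symmetric]) measurable
  finally show ?thesis using E1 E2 by simp
qed

lemma inv_antimono:
  fixes a b :: ennreal
  assumes "a \<le> b"
  shows "1 / b \<le> 1 / a"
proof (cases "a = 0")
  case True then show ?thesis by simp
next
  case a0: False
  show ?thesis
  proof (cases b)
    case top then show ?thesis by simp
  next
    case (real b')
    then obtain a' where a: "a = ennreal a'" "0 \<le> a'" "a' \<le> b'"
      using assms by (cases a) (auto simp: ennreal_le_iff2 top_unique)
    have ap: "0 < a'" using a a0 by auto
    have "1 / b = ennreal (1 / b')" using real ap a by (simp add: divide_ennreal_def inverse_ennreal divide_inverse)
    also have "\<dots> \<le> ennreal (1 / a')" using ap a by (intro ennreal_leI) (simp add: frac_le)
    also have "\<dots> = 1 / a" using a ap by (simp add: divide_ennreal_def inverse_ennreal divide_inverse)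
    finally show ?thesis .
  qed
qed

theorem lemma3p2:
  fixes Q :: "complex \<Rightarrow> ennreal" and \<Phi> :: "ennreal \<Rightarrow> ennreal"
  assumes "Q \<in> borel_measurable (restrict_space lebesgue (ball 0 1))"
    and "mono \<Phi>"
    and "convex_ennreal \<Phi>"
  shows "(\<integral>\<^sup>+ r \<in> {0<..<1}. 1 / (ennreal r * circ_mean Q r) \<partial>lborel)
    \<ge> (1/2) * (\<integral>\<^sup>+ \<tau> \<in> {\<tau>::real. (\<integral>\<^sup>+ z \<in> ball 0 1. \<Phi> (Q z) \<partial>lebesgue) < ennreal \<tau>}.
               1 / (ennreal \<tau> * gen_inv \<Phi> (ennreal \<tau>)) \<partial>lborel)"
proof -
  note Qm = assms(1) and mono = assms(2) and cvx = assms(3)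
  have Phim[measurable]: "\<Phi> \<in> borel_measurable borel" by (rule borel_measurable_mono_complete[OF mono])
  define N where "N = (\<integral>\<^sup>+ z \<in> ball 0 1. \<Phi> (Q z) \<partial>lebesgue)"
  show ?thesis
  proof (cases "N = top")
    case True
    then have "{\<tau>::real. N < ennreal \<tau>} = {}" by auto
    then show ?thesis by (simp add: N_def)
  next
    case False
    then obtain Nr where NNr: "N = ennreal Nr" and Nr0: "0 \<le> Nr" by (cases N) auto
    have Q'm: "(\<lambda>z. Q z * indicator (ball 0 1) z) \<in> borel_measurable lebesgue"
      using Qm by (subst (asm) borel_measurable_restrict_space_iff_ennreal) auto
    obtain g where gm[measurable]: "g \<in> borel_measurable lborel"
      and ae: "AE z in lborel. Q z * indicator (ball 0 1) z = g z"
      using completion_ex_borel_measurable[OF Q'm] by blast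
    from ae obtain B where B0: "{z \<in> space lborel. \<not> (Q z * indicator (ball 0 1) z = g z)} \<subseteq> B"
      "emeasure lborel B = 0" "B \<in> sets lborel"
      by (rule AE_E)
    have B: "B \<in> null_sets lborel" "{z \<in> space lborel. \<not> (Q z * indicator (ball 0 1) z = g z)} \<subseteq> B"
      using B0 by (auto simp: null_sets_def)
    have Bm[measurable]: "B \<in> sets borel" using B0 by simp
    define P where "P = (\<lambda>z. if z \<in> B then top else g z)"
    have gm'[measurable]: "g \<in> borel_measurable borel" using gm by simp
    have Pm[measurable]: "P \<in> borel_measurable borel" unfolding P_def by measurable
    have QP: "Q z \<le> P z" if "z \<in> ball 0 1" for z
    proof (cases "z \<in> B")
      case True then show ?thesis by (simp add: P_def)
    next
      case False
      then have "Q z * indicator (ball 0 1) z = g z" using B(2) by auto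
      then show ?thesis using that False by (simp add: P_def)
    qed
    have NP: "(\<integral>\<^sup>+z\<in>ball 0 1. \<Phi> (P z) \<partial>lborel) = ennreal Nr"
    proof -
      have "(\<integral>\<^sup>+z\<in>ball 0 1. \<Phi> (P z) \<partial>lborel) = (\<integral>\<^sup>+z\<in>ball 0 1. \<Phi> (P z) \<partial>lebesgue)"
        by (simp add: nn_integral_completion)
      also have "\<dots> = N"
        unfolding N_def
      proof (rule nn_integral_cong_AE)
        have "AE z in lborel. z \<notin> B" using B(1) AE_not_in by blast
        then have "AE z in lebesgue. z \<notin> B" by (rule AE_completion)
        then show "AE z in lebesgue. \<Phi> (P z) * indicator (ball 0 1) z = \<Phi> (Q z) * indicator (ball 0 1) z"
        proof eventually_elim
          case (elim z)
          show ?case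
          proof (cases "z \<in> ball 0 1")
            case True
            have "z \<notin> {z \<in> space lborel. \<not> (Q z * indicator (ball 0 1) z = g z)}"
              using B(2) elim by blast
            then have "Q z * indicator (ball 0 1) z = g z" by simp
            then show ?thesis using True elim by (simp add: P_def)
          qed simp
        qed
      qed
      finally show ?thesis using NNr by simp
    qed
    have "(1/2) * (\<integral>\<^sup>+ \<tau> \<in> {\<tau>::real. N < ennreal \<tau>}. 1 / (ennreal \<tau> * gen_inv \<Phi> (ennreal \<tau>)) \<partial>lborel)
        \<le> (\<integral>\<^sup>+r\<in>{0<..<1}. 1 / (ennreal r * circ_mean P r) \<partial>lborel)"
      using core[OF Pm mono cvx NP Nr0] NNr by simp
    also have "\<dots> \<le> (\<integral>\<^sup>+r\<in>{0<..<1}. 1 / (ennreal r * circ_mean Q r) \<partial>lborel)"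
    proof (rule nn_integral_mono)
      fix r :: real
      show "1 / (ennreal r * circ_mean P r) * indicator {0<..<1} r \<le> 1 / (ennreal r * circ_mean Q r) * indicator {0<..<1} r"
      proof (cases "r \<in> {0<..<1}")
        case True
        have "circ_mean Q r \<le> circ_mean P r"
          unfolding circ_mean_def
        proof (intro mult_left_mono nn_integral_mono)
          fix \<theta>
          have "of_real r * cis \<theta> \<in> ball 0 1" using True by (simp add: norm_mult)
          then show "Q (of_real r * cis \<theta>) * indicator {0..2*pi} \<theta> \<le> P (of_real r * cis \<theta>) * indicator {0..2*pi} \<theta>"
            using QP by (intro mult_right_mono) auto
        qed simp
        then have "ennreal r * circ_mean Q r \<le> ennreal r * circ_mean P r" by (rule mult_left_mono) simp
        then show ?thesis using True by (simp add: inv_antimono)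
      qed simp
    qed
    finally show ?thesis by (simp add: N_def)
  qed
qed


end
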